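(* Let $c:[a,b]\times S^1\to\mathbb R^2$ be a smooth horizontal path of immersions ($\langle c_t,c_\theta\rangle\equiv0$), write $c_t=a\,ic_\theta/|c_\theta|$ and $s=|c_\theta|$, and suppose $c$ satisfies the $A=0$ geodesic equation $(|c_\theta|c_t)_t=-\tfrac12\big(|c_t|^2c_\theta/|c_\theta|\big)_\theta$. Then $s(t,\theta)a(t,\theta)^2$ is independent of $t$ for every $\theta$.
   Context: $S^1=\mathbb R/2\pi\mathbb Z$, $\mathbb R^2\cong\mathbb C$. Subscripts denote partial derivatives. *)

theory Defs
  imports "HOL-Analysis.Analysis"
begin

text \<open>A path of closed curves in the plane is a map c :: real => real => complex,
  c t theta, 2 pi-periodic in theta (so theta ranges over S^1 = R / 2 pi Z).\<close>

definition dT :: "(real \<Rightarrow> real \<Rightarrow> complex) \<Rightarrow> real \<Rightarrow> real \<Rightarrow> complex" where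
  "dT f t th = vector_derivative (\<lambda>s. f s th) (at t)"

definition dTh :: "(real \<Rightarrow> real \<Rightarrow> complex) \<Rightarrow> real \<Rightarrow> real \<Rightarrow> complex" where
  "dTh f t th = vector_derivative (\<lambda>s. f t s) (at th)"

fun pderivs :: "bool list \<Rightarrow> (real \<Rightarrow> real \<Rightarrow> complex) \<Rightarrow> real \<Rightarrow> real \<Rightarrow> complex" where
  "pderivs [] f = f"
| "pderivs (True # w) f = dT (pderivs w f)"
| "pderivs (False # w) f = dTh (pderivs w f)"

definition smooth2_on :: "(real \<times> real) set \<Rightarrow> (real \<Rightarrow> real \<Rightarrow> complex) \<Rightarrow> bool" where
  "smooth2_on U f \<longleftrightarrow>
     (\<forall>w. continuous_on U (\<lambda>(t, th). pderivs w f t th) \<and>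
          (\<forall>(t, th)\<in>U. (\<lambda>s. pderivs w f s th) differentiable (at t) \<and>
                        (\<lambda>s. pderivs w f t s) differentiable (at th)))"

end

theory Submission
  imports Defs
begin


lemma hvd_inner:
  fixes f g :: "real \<Rightarrow> 'a::real_inner"
  assumes "(f has_vector_derivative f') (at x within s)" "(g has_vector_derivative g') (at x within s)"
  shows "((\<lambda>x. f x \<bullet> g x) has_real_derivative (f x \<bullet> g' + f' \<bullet> g x)) (at x within s)"
  unfolding has_real_derivative_iff_has_vector_derivative
  using bounded_bilinear.has_vector_derivative[OF bounded_bilinear_inner assms] by simp

lemma hvd_norm:
  fixes v :: "real \<Rightarrow> 'a::real_inner"
  assumes "v t \<noteq> 0" "(v has_vector_derivative v') (at t)"
  shows "((\<lambda>s. norm (v s)) has_real_derivative (v t \<bullet> v') / norm (v t)) (at t)"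
proof -
  have i: "((\<lambda>s. v s \<bullet> v s) has_real_derivative (2 * (v t \<bullet> v'))) (at t)"
    using hvd_inner[OF assms(2) assms(2)] by (simp add: inner_commute)
  have p: "0 < v t \<bullet> v t" using assms(1) by simp
  have "((\<lambda>s. sqrt (v s \<bullet> v s)) has_real_derivative (inverse (sqrt (v t \<bullet> v t)) / 2) * (2 * (v t \<bullet> v'))) (at t)"
    by (rule DERIV_chain2[OF DERIV_real_sqrt[OF p] i])
  then show ?thesis
    by (simp add: norm_eq_sqrt_inner[symmetric] field_simps)
qed

lemma hvd_ofreal_mult:
  fixes g :: "real \<Rightarrow> real" and V :: "real \<Rightarrow> complex"
  assumes "(g has_real_derivative g') (at x)" "(V has_vector_derivative V') (at x)"
  shows "((\<lambda>s. complex_of_real (g s) * V s) has_vector_derivative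
          (complex_of_real (g x) * V' + complex_of_real g' * V x)) (at x)"
  using has_vector_derivative_mult[OF has_vector_derivative_of_real[OF assms(1)] assms(2)] .



lemma smooth_facts:
  assumes sm: "smooth2_on U f" and p: "(x, y) \<in> U"
  shows "((\<lambda>s. pderivs w f s y) has_vector_derivative pderivs (True # w) f x y) (at x)"
    and "((\<lambda>s. pderivs w f x s) has_vector_derivative pderivs (False # w) f x y) (at y)"
    and "continuous_on U (\<lambda>(t, th). pderivs w f t th)"
  using sm p unfolding smooth2_on_def
  by (auto simp: dT_def dTh_def intro!: vector_derivative_works[THEN iffD1])

lemma clairaut:
  fixes f :: "real \<Rightarrow> real \<Rightarrow> complex"
  assumes U: "open U" and sm: "smooth2_on U f" and p: "(t, th) \<in> U"
  shows "dTh (dT f) t th = dT (dTh f) t th"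
proof -
  obtain r where r: "r > 0" "ball (t, th) r \<subseteq> U" using U p open_contains_ball by blast
  define e where "e = r / 3"
  have e: "e > 0" using r e_def by simp
  define T where "T = {t - e .. t + e}"
  define a where "a = th - e"
  define b where "b = th + e"
  have box: "(x, y) \<in> U" if "x \<in> T" "y \<in> {a..b}" for x y
  proof -
    have "dist (x, y) (t, th) \<le> dist x t + dist y th"
      by (simp add: dist_Pair_Pair sqrt_sum_squares_le_sum_abs dist_real_def)
    also have "\<dots> < r" using that unfolding T_def a_def b_def e_def dist_real_def using r by auto
    finally show ?thesis using r(2) by (auto simp: dist_commute)
  qed
  have boxU: "T \<times> {a..b} \<subseteq> U" using box by auto
  have D1: "((\<lambda>s. f x s) has_vector_derivative dTh f x y) (at y)" if "(x,y) \<in> U" for x y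
    using smooth_facts(2)[OF sm that, of "[]"] by simp
  have D2: "((\<lambda>s. dTh f s y) has_vector_derivative dT (dTh f) x y) (at x)" if "(x,y) \<in> U" for x y
    using smooth_facts(1)[OF sm that, of "[False]"] by simp
  have D3: "((\<lambda>s. f s y) has_vector_derivative dT f x y) (at x)" if "(x,y) \<in> U" for x y
    using smooth_facts(1)[OF sm that, of "[]"] by simp
  have D4: "((\<lambda>s. dT f x s) has_vector_derivative dTh (dT f) x y) (at y)" if "(x,y) \<in> U" for x y
    using smooth_facts(2)[OF sm that, of "[True]"] by simp
  have C: "continuous_on U (\<lambda>(x, y). dT (dTh f) x y)"
    using smooth_facts(3)[OF sm p, of "[True, False]"] by simp
  have C1: "continuous_on U (\<lambda>(x, y). dTh f x y)"
    using smooth_facts(3)[OF sm p, of "[False]"] by simp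
  have tT: "t \<in> interior T" using e unfolding T_def by auto
  have tT': "t \<in> T" using e unfolding T_def by auto
  have thab: "th \<in> interior {a..b}" using e unfolding a_def b_def by auto
  have thab': "th \<in> {a..b}" using e unfolding a_def b_def by auto
  have ab: "a \<le> b" using e unfolding a_def b_def by auto
  have S1: "f x y - f x a = integral {a..y} (\<lambda>s. dTh f x s)" if "x \<in> T" "y \<in> {a..b}" for x y
  proof -
    have "((\<lambda>s. dTh f x s) has_integral (f x y - f x a)) {a..y}"
      apply (rule fundamental_theorem_of_calculus)
      using that apply simp
      apply (rule has_vector_derivative_at_within)
      using D1 box that by auto
    then show ?thesis by (simp add: integral_unique)
  qed
  have S2: "dT f t y - dT f t a = integral {a..y} (\<lambda>s. dT (dTh f) t s)" if y: "y \<in> {a..b}" for y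
  proof -
    have L: "((\<lambda>x. integral (cbox a y) (\<lambda>s. dTh f x s)) has_vector_derivative
              integral (cbox a y) (\<lambda>s. dT (dTh f) t s)) (at t within T)"
    proof (rule leibniz_rule_vector_derivative)
      fix x s assume "x \<in> T" "s \<in> cbox a y"
      then show "((\<lambda>x. dTh f x s) has_vector_derivative dT (dTh f) x s) (at x within T)"
        using D2 box y by (auto intro: has_vector_derivative_at_within)
    next
      fix x assume x: "x \<in> T"
      have "continuous_on (cbox a y) (\<lambda>s. dTh f x s)"
        apply (rule continuous_on_compose2[OF C1, where f="\<lambda>s. (x, s)", unfolded split_beta fst_conv snd_conv])
        using x y box by (auto intro!: continuous_intros)
      then show "(\<lambda>s. dTh f x s) integrable_on cbox a y" by (rule integrable_continuous)
    next
      show "continuous_on (T \<times> cbox a y) (\<lambda>(x, t). dT (dTh f) x t)"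
        by (rule continuous_on_subset[OF C]) (use y box in auto)
    qed (auto simp: T_def e less_imp_le)
    have R: "((\<lambda>x. f x y - f x a) has_vector_derivative dT f t y - dT f t a) (at t within T)"
      apply (rule has_vector_derivative_at_within)
      apply (rule has_vector_derivative_diff)
      using D3 box y tT' ab by auto
    have R': "((\<lambda>x. integral (cbox a y) (\<lambda>s. dTh f x s)) has_vector_derivative dT f t y - dT f t a) (at t within T)"
      by (rule has_vector_derivative_transform[OF tT' _ R]) (use S1 y in auto)
    show ?thesis
      using vector_derivative_unique_at[OF R'[unfolded at_within_interior[OF tT]] L[unfolded at_within_interior[OF tT]]]
      by simp
  qed
  have Cc: "continuous_on {a..b} (\<lambda>s. dT (dTh f) t s)"
    apply (rule continuous_on_compose2[OF C, where f="\<lambda>s. (t, s)", unfolded split_beta fst_conv snd_conv])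
    using tT' box by (auto intro!: continuous_intros)
  have I: "((\<lambda>y. dT f t a + integral {a..y} (\<lambda>s. dT (dTh f) t s)) has_vector_derivative dT (dTh f) t th) (at th within {a..b})"
    using has_vector_derivative_add[OF has_vector_derivative_const integral_has_vector_derivative[OF Cc thab']] by (simp only: add_0)
  have I': "((\<lambda>y. dT f t y) has_vector_derivative dT (dTh f) t th) (at th within {a..b})"
    by (rule has_vector_derivative_transform[OF thab' _ I]) (metis S2 add.commute diff_add_cancel)
  show ?thesis
    using vector_derivative_unique_at[OF D4[OF p] I'[unfolded at_within_interior[OF thab]]] .
qed



theorem mainTheorem17:
  fixes c :: "real \<Rightarrow> real \<Rightarrow> complex"
    and a :: "real \<Rightarrow> real \<Rightarrow> real"
    and t0 t1 :: real
  assumes interval: "t0 < t1"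
    and smooth: "\<exists>U. open U \<and> {t0..t1} \<times> UNIV \<subseteq> U \<and> smooth2_on U c"
    and periodic: "\<And>t th. c t (th + 2 * pi) = c t th"
    and immersion: "\<And>t th. t \<in> {t0..t1} \<Longrightarrow> dTh c t th \<noteq> 0"
    and horizontal: "\<And>t th. t \<in> {t0..t1} \<Longrightarrow> dT c t th \<bullet> dTh c t th = 0"
    and a_def: "\<And>t th. t \<in> {t0..t1} \<Longrightarrow>
                  dT c t th = complex_of_real (a t th) * \<i> * dTh c t th / complex_of_real (norm (dTh c t th))"
    and geodesic: "\<And>t th. t \<in> {t0..t1} \<Longrightarrow>
          dT (\<lambda>t th. complex_of_real (norm (dTh c t th)) * dT c t th) t th
          = - (1/2) * dTh (\<lambda>t th. complex_of_real ((norm (dT c t th))\<^sup>2 / norm (dTh c t th)) * dTh c t th) t th"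
  shows "\<forall>th. \<forall>t\<in>{t0..t1}. norm (dTh c t th) * (a t th)\<^sup>2 = norm (dTh c t0 th) * (a t0 th)\<^sup>2"
proof (intro allI ballI)
  fix th t assume tI: "t \<in> {t0..t1}"
  obtain U where U: "open U" "{t0..t1} \<times> UNIV \<subseteq> U" "smooth2_on U c" using smooth by blast
  define F where "F t = norm (dTh c t th) * (dT c t th \<bullet> dT c t th)" for t
  have deriv: "(F has_real_derivative 0) (at t)" if tI: "t \<in> {t0..t1}" for t
  proof -
    have P: "(t, th) \<in> U" using U tI by auto
    define v where "v = dTh c t th"
    define w where "w = dT c t th"
    define v' where "v' = dT (dTh c) t th"
    define w' where "w' = dT (dT c) t th"
    define V\<theta> where "V\<theta> = dTh (dTh c) t th"
    define W\<theta> where "W\<theta> = dTh (dT c) t th"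
    have hv: "((\<lambda>s. dTh c s th) has_vector_derivative v') (at t)"
      using smooth_facts(1)[OF U(3) P, of "[False]"] by (simp add: v'_def)
    have hw: "((\<lambda>s. dT c s th) has_vector_derivative w') (at t)"
      using smooth_facts(1)[OF U(3) P, of "[True]"] by (simp add: w'_def)
    have hV: "((\<lambda>s. dTh c t s) has_vector_derivative V\<theta>) (at th)"
      using smooth_facts(2)[OF U(3) P, of "[False]"] by (simp add: V\<theta>_def)
    have hW: "((\<lambda>s. dT c t s) has_vector_derivative W\<theta>) (at th)"
      using smooth_facts(2)[OF U(3) P, of "[True]"] by (simp add: W\<theta>_def)
    have cl: "W\<theta> = v'" unfolding W\<theta>_def v'_def by (rule clairaut[OF U(1) U(3) P])
    have v0: "v \<noteq> 0" using immersion tI v_def by simp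
    define n where "n = norm v"
    have n0: "n > 0" using v0 n_def by simp
    define N' where "N' = (v \<bullet> v') / n"
    have hn: "((\<lambda>s. norm (dTh c s th)) has_real_derivative N') (at t)"
      using hvd_norm[of "\<lambda>s. dTh c s th", OF _ hv] v0 by (simp add: v_def N'_def n_def)
    have hww: "((\<lambda>s. dT c s th \<bullet> dT c s th) has_real_derivative (w \<bullet> w' + w' \<bullet> w)) (at t)"
      using hvd_inner[OF hw hw] by (simp add: w_def)
    have hF: "(F has_real_derivative (norm v * (w \<bullet> w' + w' \<bullet> w) + N' * (w \<bullet> w))) (at t)"
      unfolding F_def[abs_def] using DERIV_mult[OF hn hww] by (simp add: v_def w_def algebra_simps)
    have L: "dT (\<lambda>t th. complex_of_real (norm (dTh c t th)) * dT c t th) t th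
             = complex_of_real n * w' + complex_of_real N' * w"
      unfolding dT_def[of "\<lambda>t th. complex_of_real (norm (dTh c t th)) * dT c t th"]
      using hvd_ofreal_mult[OF hn hw] by (simp add: vector_derivative_at n_def v_def w_def)
    have hNth: "((\<lambda>s. norm (dTh c t s)) has_real_derivative (v \<bullet> V\<theta>) / norm v) (at th)"
      using hvd_norm[of "\<lambda>s. dTh c t s", OF _ hV] v0 by (simp add: v_def)
    have hWW: "((\<lambda>s. dT c t s \<bullet> dT c t s) has_real_derivative (w \<bullet> W\<theta> + W\<theta> \<bullet> w)) (at th)"
      using hvd_inner[OF hW hW] by (simp add: w_def)
    define g where "g s = (norm (dT c t s))\<^sup>2 / norm (dTh c t s)" for s
    have "\<exists>g'. (g has_real_derivative g') (at th)"
      unfolding g_def power2_norm_eq_inner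
      using DERIV_divide[OF hWW hNth] v0 v_def by auto
    then obtain g' where hg: "(g has_real_derivative g') (at th)" by blast
    have R: "dTh (\<lambda>t th. complex_of_real ((norm (dT c t th))\<^sup>2 / norm (dTh c t th)) * dTh c t th) t th
             = complex_of_real (g th) * V\<theta> + complex_of_real g' * v"
      unfolding dTh_def[of "\<lambda>t th. complex_of_real ((norm (dT c t th))\<^sup>2 / norm (dTh c t th)) * dTh c t th"]
      using hvd_ofreal_mult[OF hg hV] by (simp add: vector_derivative_at g_def v_def)
    have gth: "g th = (w \<bullet> w) / n" by (simp add: g_def w_def n_def v_def power2_norm_eq_inner)
    have h0: "w \<bullet> v = 0" using horizontal tI by (simp add: w_def v_def)
    have hh: "((\<lambda>s. dT c t s \<bullet> dTh c t s) has_real_derivative (w \<bullet> V\<theta> + W\<theta> \<bullet> v)) (at th)"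
      using hvd_inner[OF hW hV] by (simp add: w_def v_def)
    have "(\<lambda>s. dT c t s \<bullet> dTh c t s) = (\<lambda>s. 0)" using horizontal tI by auto
    then have hh0: "w \<bullet> V\<theta> + W\<theta> \<bullet> v = 0"
      using hh DERIV_const DERIV_unique by metis
    have G: "complex_of_real n * w' + complex_of_real N' * w
             = - (1/2) * (complex_of_real (g th) * V\<theta> + complex_of_real g' * v)"
      using geodesic[OF tI] L R by simp
    have ip: "w \<bullet> (complex_of_real r * z) = r * (w \<bullet> z)" for r z
      by (simp add: scaleR_conv_of_real[symmetric])
    have ip2: "w \<bullet> (- (1/2) * z) = - (1/2) * (w \<bullet> z)" for z
    proof -
      have "- (1/2) * z = complex_of_real (- 1/2) * z" by simp
      then show ?thesis using ip[of "-1/2" z] by simp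
    qed
    have e1: "w \<bullet> (complex_of_real n * w' + complex_of_real N' * w) = n * (w \<bullet> w') + N' * (w \<bullet> w)"
      by (simp only: inner_add_right ip)
    have e2: "w \<bullet> (- (1/2) * (complex_of_real (g th) * V\<theta> + complex_of_real g' * v))
              = - (1/2) * (g th * (w \<bullet> V\<theta>) + g' * (w \<bullet> v))"
      by (simp only: ip2 inner_add_right ip)
    have "n * (w \<bullet> w') + N' * (w \<bullet> w) = - (1/2) * (g th * (w \<bullet> V\<theta>) + g' * (w \<bullet> v))"
      using e1 e2 G by metis
    moreover have wV: "w \<bullet> V\<theta> = - (v \<bullet> v')"
      using hh0 cl inner_commute[of v' v] by simp
    ultimately have E: "n * (w \<bullet> w') + N' * (w \<bullet> w) = (1/2) * ((w \<bullet> w) / n) * (v \<bullet> v')"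
      using h0 gth by simp
    have E2: "(1/2) * ((w \<bullet> w) / n) * (v \<bullet> v') = (N' * (w \<bullet> w)) / 2"
      unfolding N'_def by (simp add: mult.commute)
    have "norm v * (w \<bullet> w' + w' \<bullet> w) + N' * (w \<bullet> w) = 0"
      using E E2 unfolding n_def inner_commute[of w' w] distrib_left by linarith
    then show ?thesis using hF by simp
  qed
  have cont: "continuous_on {t0..t1} F"
    by (rule continuous_at_imp_continuous_on) (use deriv DERIV_isCont in blast)
  have Feq: "F t = F t0"
  proof (rule DERIV_isconst2[OF interval cont])
    fix x assume "t0 < x" "x < t1"
    then show "(F has_real_derivative 0) (at x)" using deriv by simp
  qed (use tI in auto)
  have na: "norm (dT c s th) = \<bar>a s th\<bar>" if "s \<in> {t0..t1}" for s
  proof -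
    have "norm (dT c s th) = \<bar>a s th\<bar> * 1 * norm (dTh c s th) / \<bar>norm (dTh c s th)\<bar>"
      by (simp only: a_def[OF that, of th] norm_mult norm_divide norm_of_real norm_ii)
    then show ?thesis using immersion[OF that, of th] by simp
  qed
  have Fa: "F s = norm (dTh c s th) * (a s th)\<^sup>2" if "s \<in> {t0..t1}" for s
    unfolding F_def power2_norm_eq_inner[symmetric] na[OF that] by simp
  show "norm (dTh c t th) * (a t th)\<^sup>2 = norm (dTh c t0 th) * (a t0 th)\<^sup>2"
    using Feq Fa[OF tI] Fa[of t0] interval by auto
qed


end
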